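(* Let $E$ be a uniformly convex Banach space and $n$ a positive integer. For every $\varepsilon>0$ there is $\delta>0$ such that for all continuous isometric linear representations $\rho_1,\dots,\rho_n:\mathbb{R}\to\mathrm{O}(E)$, all $a_1,\dots,a_n\in\mathbb{R}$ and all $\xi\in E$: if $\|\rho_1(\gamma_{a_1})\cdots\rho_n(\gamma_{a_n})\xi\|\ge(1-\delta)\|\xi\|$, then $\max_{1\le i\le n}\max_{|t|\le e^{a_i}}\|\rho_i(t)\xi-\xi\|\le\varepsilon\|\xi\|$.
   Context: $\gamma_a$ is the centered Gaussian probability measure on $\mathbb{R}$ with variance $e^{2a}$, and $\rho(\gamma_a)=\int\rho(t)\,d\gamma_a(t)$ (strong integral, a bounded operator). $\mathrm{O}(E)$ is the group of linear isometries of $E$. *)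

theory Defs
  imports "HOL-Analysis.Analysis" "HOL-Probability.Probability"
begin

definition uniformly_convex :: "'a::real_normed_vector itself \<Rightarrow> bool" where
  "uniformly_convex (_::'a itself) \<longleftrightarrow>
     (\<forall>\<epsilon>>0. \<exists>\<delta>>0. \<forall>x y::'a. norm x \<le> 1 \<longrightarrow> norm y \<le> 1 \<longrightarrow> norm (x - y) \<ge> \<epsilon>
        \<longrightarrow> norm ((x + y) /\<^sub>R 2) \<le> 1 - \<delta>)"

definition isometric_rep :: "(real \<Rightarrow> 'a::real_normed_vector \<Rightarrow> 'a) \<Rightarrow> bool" where
  "isometric_rep \<rho> \<longleftrightarrow>
     (\<forall>t. linear (\<rho> t) \<and> (\<forall>x. norm (\<rho> t x) = norm x) \<and> surj (\<rho> t)) \<and>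
     \<rho> 0 = id \<and> (\<forall>s t. \<rho> (s + t) = \<rho> s \<circ> \<rho> t) \<and>
     (\<forall>x. continuous_on UNIV (\<lambda>t. \<rho> t x))"

text \<open>\<rho>(\<gamma>_a) \<xi> = \<integral> \<rho>(t) \<xi> d\<gamma>_a(t), \<gamma>_a the centered Gaussian with variance e^(2a),
  i.e. standard deviation e^a.\<close>
definition gauss_op :: "(real \<Rightarrow> 'a::real_normed_vector \<Rightarrow> 'a) \<Rightarrow> real \<Rightarrow> 'a \<Rightarrow> 'a" where
  "gauss_op \<rho> a \<xi> = integral UNIV (\<lambda>t. normal_density 0 (exp a) t *\<^sub>R \<rho> t \<xi>)"

definition gauss_prod :: "nat \<Rightarrow> (nat \<Rightarrow> real \<Rightarrow> 'a::real_normed_vector \<Rightarrow> 'a) \<Rightarrow> (nat \<Rightarrow> real) \<Rightarrow> 'a \<Rightarrow> 'a" where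
  "gauss_prod n \<rho> a = foldr (\<lambda>i f. gauss_op (\<rho> i) (a i) \<circ> f) [0..<n] id"

end

theory Submission imports Defs begin
lemma real_int:
  fixes g :: "real \<Rightarrow> real"
  assumes "continuous_on UNIV g" "\<And>s. \<bar>g s\<bar> \<le> B" "\<sigma> > 0"
  shows "integrable lborel (\<lambda>s. normal_density 0 \<sigma> s * g s)"
proof (rule Bochner_Integration.integrable_bound)
  show "integrable lborel (\<lambda>s. normal_density 0 \<sigma> s * B)" using assms(3) by simp
  have "g \<in> borel_measurable borel" using assms(1) by (rule borel_measurable_continuous_onI)
  then show "(\<lambda>s. normal_density 0 \<sigma> s * g s) \<in> borel_measurable lborel" by measurable
  show "AE x in lborel. norm (normal_density 0 \<sigma> x * g x) \<le> norm (normal_density 0 \<sigma> x * B)"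
    using assms(2) by (auto simp: abs_mult intro!: mult_left_mono order.trans[OF _ abs_ge_self])
qed
lemma dens_int: assumes "\<sigma> > 0" shows "(normal_density 0 \<sigma> has_integral 1) UNIV"
  using has_integral_integral_lborel[OF integrable_normal_density[OF assms]] integral_normal_density[OF assms] by simp
lemma dens_lower:
  assumes "\<sigma> > 0" "\<bar>s\<bar> \<le> \<sigma>"
  shows "normal_density 0 \<sigma> s \<ge> 1 / (6 * \<sigma>)"
proof -
  have "s\<^sup>2 \<le> \<sigma>\<^sup>2" using assms by (metis abs_ge_zero power2_abs power_mono)
  then have "-(s - 0)\<^sup>2/ (2 * \<sigma>\<^sup>2) \<ge> -1/2" using assms by (simp add: field_simps)
  then have e: "exp (-(s - 0)\<^sup>2/ (2 * \<sigma>\<^sup>2)) \<ge> 1/2"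
    using exp_ge_add_one_self[of "-(s - 0)\<^sup>2/ (2 * \<sigma>\<^sup>2)"] by linarith
  have "sqrt (2 * pi * \<sigma>\<^sup>2) = sqrt (2*pi) * \<sigma>" using assms by (simp add: real_sqrt_mult)
  moreover have "sqrt (2*pi) \<le> 3" using pi_less_4 by (intro real_le_lsqrt) auto
  ultimately have q: "sqrt (2 * pi * \<sigma>\<^sup>2) \<le> 3 * \<sigma>" "sqrt (2 * pi * \<sigma>\<^sup>2) > 0" using assms by auto
  have "1 / (6 * \<sigma>) \<le> 1 / sqrt (2 * pi * \<sigma>\<^sup>2) * (1/2)"
    using q assms by (simp add: field_simps)
  also have "\<dots> \<le> 1 / sqrt (2 * pi * \<sigma>\<^sup>2) * exp (-(s - 0)\<^sup>2/ (2 * \<sigma>\<^sup>2))"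
    using e q by (intro mult_left_mono) auto
  finally show ?thesis by (simp add: normal_density_def)
qed

lemma ucs:
  assumes uc: "\<forall>x y::'a::real_normed_vector. norm x \<le> 1 \<longrightarrow> norm y \<le> 1 \<longrightarrow> norm (x - y) \<ge> \<epsilon>
        \<longrightarrow> norm ((x + y) /\<^sub>R 2) \<le> 1 - d"
    and r: "r > 0" and x: "norm x \<le> r" and y: "norm (y::'a) \<le> r" and xy: "norm (x - y) \<ge> \<epsilon> * r"
  shows "norm (x + y) \<le> 2 * (1 - d) * r"
proof -
  have ir: "inverse r * r = 1" using r by simp
  have ir0: "inverse r \<ge> 0" using r by simp
  have nx: "norm (x /\<^sub>R r) = inverse r * norm x" using r by simp
  have ny: "norm (y /\<^sub>R r) = inverse r * norm y" using r by simp
  have "inverse r * norm x \<le> inverse r * r" using x ir0 by (rule mult_left_mono)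
  then have 1: "norm (x /\<^sub>R r) \<le> 1" unfolding nx ir .
  have "inverse r * norm y \<le> inverse r * r" using y ir0 by (rule mult_left_mono)
  then have 2: "norm (y /\<^sub>R r) \<le> 1" unfolding ny ir .
  have e1: "x /\<^sub>R r - y /\<^sub>R r = (x - y) /\<^sub>R r" by (rule scaleR_diff_right[symmetric])
  have nxy: "norm ((x - y) /\<^sub>R r) = inverse r * norm (x - y)" using r by simp
  have "inverse r * (\<epsilon> * r) \<le> inverse r * norm (x - y)" using xy ir0 by (rule mult_left_mono)
  moreover have "inverse r * (\<epsilon> * r) = \<epsilon>" using r by simp
  ultimately have 3: "norm (x /\<^sub>R r - y /\<^sub>R r) \<ge> \<epsilon>" unfolding e1 nxy by simp
  have N: "norm ((x /\<^sub>R r + y /\<^sub>R r) /\<^sub>R 2) \<le> 1 - d" using uc 1 2 3 by blast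
  have e2: "(x /\<^sub>R r + y /\<^sub>R r) /\<^sub>R 2 = (inverse 2 * inverse r) *\<^sub>R (x + y)"
    by (simp add: scaleR_add_right)
  have n2: "norm ((inverse 2 * inverse r) *\<^sub>R (x + y)) = (inverse 2 * inverse r) * norm (x + y)"
    using r by simp
  have N2: "(inverse 2 * inverse r) * norm (x + y) \<le> 1 - d" using N unfolding e2 n2 .
  have "(2 * r) * ((inverse 2 * inverse r) * norm (x + y)) \<le> (2 * r) * (1 - d)"
    using N2 r by (intro mult_left_mono) auto
  moreover have "(2 * r) * ((inverse 2 * inverse r) * norm (x + y)) = norm (x + y)" using r by simp
  moreover have "(2 * r) * (1 - d) = 2 * (1 - d) * r" by (simp add: algebra_simps)
  ultimately show ?thesis by linarith
qed

lemma icont: "continuous_on UNIV (k::real\<Rightarrow>real) \<Longrightarrow> k integrable_on {a..b}"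
  by (rule integrable_continuous_interval, rule continuous_on_subset[of UNIV]) auto

lemma single:
  assumes uc: "uniformly_convex TYPE('a::banach)" and e: "\<epsilon> > 0"
  shows "\<exists>\<delta>>0. \<delta> < 1 \<and> (\<forall>(\<rho>::real \<Rightarrow> 'a \<Rightarrow> 'a) a \<xi> r. isometric_rep \<rho> \<longrightarrow> r > 0 \<longrightarrow> norm \<xi> \<le> r \<longrightarrow>
      norm (gauss_op \<rho> a \<xi>) \<ge> (1 - \<delta>) * r \<longrightarrow>
      (\<forall>t. \<bar>t\<bar> \<le> exp a \<longrightarrow> norm (\<rho> t \<xi> - \<xi>) \<le> 2 * \<epsilon> * r) \<and> norm (\<xi> - gauss_op \<rho> a \<xi>) \<le> 3 * \<epsilon> * r)"
proof -
  obtain d where d: "d > 0" and UC: "\<forall>x y::'a. norm x \<le> 1 \<longrightarrow> norm y \<le> 1 \<longrightarrow> norm (x - y) \<ge> \<epsilon>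
        \<longrightarrow> norm ((x + y) /\<^sub>R 2) \<le> 1 - d"
    using uc e unfolding uniformly_convex_def by blast
  define \<delta> where "\<delta> = min (d/48) (1/2)"
  have \<delta>: "\<delta> > 0" "\<delta> < 1" "\<delta> \<le> d/48" using d by (auto simp: \<delta>_def)
  show ?thesis
  proof (rule exI[of _ \<delta>], rule conjI[OF \<delta>(1)], rule conjI[OF \<delta>(2)], intro allI impI)
    fix \<rho> :: "real \<Rightarrow> 'a \<Rightarrow> 'a" and a and \<xi> :: 'a and r :: real
    assume rep: "isometric_rep \<rho>" and r: "r > 0" and \<xi>r: "norm \<xi> \<le> r"
      and big: "norm (gauss_op \<rho> a \<xi>) \<ge> (1 - \<delta>) * r"
    have lin: "\<And>t. linear (\<rho> t)" and iso: "\<And>t x. norm (\<rho> t x) = norm x"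
      and \<rho>0: "\<rho> 0 = id" and comp: "\<And>s t x. \<rho> (s + t) x = \<rho> s (\<rho> t x)"
      and cont: "\<And>x. continuous_on UNIV (\<lambda>t. \<rho> t x)"
      using rep unfolding isometric_rep_def by auto
    define \<sigma> where "\<sigma> = exp a"
    have \<sigma>: "\<sigma> > 0" by (simp add: \<sigma>_def)
    define p where "p = normal_density 0 \<sigma>"
    define \<eta> where "\<eta> = gauss_op \<rho> a \<xi>"
    have \<eta>def: "\<eta> = integral UNIV (\<lambda>s. p s *\<^sub>R \<rho> s \<xi>)"
      by (simp add: \<eta>_def gauss_op_def p_def \<sigma>_def)
    have p_int: "(p has_integral 1) UNIV" unfolding p_def using dens_int[OF \<sigma>] .
    have p_nn: "\<And>s. p s \<ge> 0" by (simp add: p_def)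
    have p_cont: "continuous_on UNIV p" unfolding p_def normal_density_def using \<sigma>
      by (auto intro!: continuous_intros)
    have "(1 - \<delta>) * r > 0" using \<delta> r by simp
    then have "\<eta> \<noteq> 0" using big \<eta>_def by auto
    then have f_int: "(\<lambda>s. p s *\<^sub>R \<rho> s \<xi>) integrable_on UNIV"
      using \<open>\<eta> \<noteq> 0\<close> unfolding \<eta>def using not_integrable_integral by blast
    have "norm \<eta> \<le> integral UNIV (\<lambda>s. p s * norm \<xi>)"
      unfolding \<eta>def
      by (rule integral_norm_bound_integral[OF f_int])
         (auto simp: iso p_nn intro!: integrable_on_mult_left[OF has_integral_integrable[OF p_int]])
    also have "\<dots> = norm \<xi>" using integral_unique[OF has_integral_mult_left[OF p_int, of "norm \<xi>"]] by simp
    finally have \<eta>\<xi>: "norm \<eta> \<le> norm \<xi>" .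
    define G where "G s = norm (\<rho> s \<xi> + \<eta>)" for s
    have G_cont: "continuous_on UNIV G" unfolding G_def by (intro continuous_intros cont)
    have G_le: "G s \<le> 2 * r" for s
    proof -
      have "G s \<le> norm (\<rho> s \<xi>) + norm \<eta>" unfolding G_def by (rule norm_triangle_ineq)
      then show ?thesis using iso[of s \<xi>] \<eta>\<xi> \<xi>r by linarith
    qed
    have G_nn: "\<And>s. G s \<ge> 0" by (simp add: G_def)
    have pG_int: "(\<lambda>s. p s * G s) integrable_on UNIV"
      unfolding p_def
      by (rule integrable_on_lborel, rule real_int[OF G_cont _ \<sigma>, of "2*r"]) (simp add: abs_of_nonneg[OF G_nn] G_le)
    have sum_int: "((\<lambda>s. p s *\<^sub>R \<rho> s \<xi> + p s *\<^sub>R \<eta>) has_integral (\<eta> + \<eta>)) UNIV"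
      unfolding \<eta>def
      by (intro has_integral_add integrable_integral f_int)
        (use has_integral_scaleR_left[OF p_int, of \<eta>] \<eta>def in simp)
    have "norm (\<eta> + \<eta>) \<le> integral UNIV (\<lambda>s. p s * G s)"
    proof -
      have "\<And>s. norm (p s *\<^sub>R \<rho> s \<xi> + p s *\<^sub>R \<eta>) \<le> p s * G s"
        by (simp add: G_def p_nn flip: scaleR_add_right)
      then show ?thesis
        using integral_norm_bound_integral[OF has_integral_integrable[OF sum_int] pG_int]
          integral_unique[OF sum_int] by simp
    qed
    moreover have "norm (\<eta> + \<eta>) = 2 * norm \<eta>"
    proof -
      have "\<eta> + \<eta> = 2 *\<^sub>R \<eta>" by (simp add: scaleR_2)
      then show ?thesis by simp
    qed
    ultimately have I_ge: "integral UNIV (\<lambda>s. p s * G s) \<ge> 2 * ((1 - \<delta>) * r)"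
      using big[folded \<eta>_def] by linarith
    define h where "h s = 2 * r - G s" for s
    have h_nn: "\<And>s. h s \<ge> 0" using G_le by (simp add: h_def)
    have h_cont: "continuous_on UNIV h" unfolding h_def by (intro continuous_intros G_cont)
    have ph_has: "((\<lambda>s. p s * h s) has_integral (2 * r - integral UNIV (\<lambda>s. p s * G s))) UNIV"
      unfolding h_def right_diff_distrib
      using has_integral_diff[OF has_integral_mult_left[OF p_int, of "2*r"] integrable_integral[OF pG_int]]
      by (simp add: mult.commute)
    have ph_le: "integral UNIV (\<lambda>s. p s * h s) \<le> 2 * \<delta> * r"
      using integral_unique[OF ph_has] I_ge by (simp add: algebra_simps)
    have A: "integral {-\<sigma>..\<sigma>} h \<le> 12 * \<delta> * \<sigma> * r"
    proof -
      have "integral {-\<sigma>..\<sigma>} h \<le> integral {-\<sigma>..\<sigma>} (\<lambda>s. (6 * \<sigma>) * (p s * h s))"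
      proof (rule integral_le)
        show "h integrable_on {-\<sigma>..\<sigma>}" by (rule icont[OF h_cont])
        show "(\<lambda>s. (6 * \<sigma>) * (p s * h s)) integrable_on {-\<sigma>..\<sigma>}"
          by (intro icont continuous_intros p_cont h_cont)
        fix s assume "s \<in> {-\<sigma>..\<sigma>}"
        then have "p s \<ge> 1 / (6 * \<sigma>)" unfolding p_def by (intro dens_lower \<sigma>) auto
        then have "6 * \<sigma> * p s \<ge> 1" using \<sigma> by (simp add: field_simps)
        then have "1 * h s \<le> (6 * \<sigma> * p s) * h s" using h_nn[of s] by (intro mult_right_mono) auto
        then show "h s \<le> (6 * \<sigma>) * (p s * h s)" by (simp add: mult.assoc)
      qed
      also have "\<dots> = (6 * \<sigma>) * integral {-\<sigma>..\<sigma>} (\<lambda>s. p s * h s)" by simp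
      finally have a1: "integral {-\<sigma>..\<sigma>} h \<le> (6 * \<sigma>) * integral {-\<sigma>..\<sigma>} (\<lambda>s. p s * h s)" .
      have "integral {-\<sigma>..\<sigma>} (\<lambda>s. p s * h s) \<le> integral UNIV (\<lambda>s. p s * h s)"
        by (intro integral_subset_le integrable_on_subinterval[OF has_integral_integrable[OF ph_has]]
            has_integral_integrable[OF ph_has]) (auto simp: p_nn h_nn)
      then have "integral {-\<sigma>..\<sigma>} (\<lambda>s. p s * h s) \<le> 2 * \<delta> * r" using ph_le by linarith
      then have "(6 * \<sigma>) * integral {-\<sigma>..\<sigma>} (\<lambda>s. p s * h s) \<le> (6 * \<sigma>) * (2 * \<delta> * r)"
        using \<sigma> by (intro mult_left_mono) auto
      also have "(6 * \<sigma>) * (2 * \<delta> * r) = 12 * \<delta> * \<sigma> * r" by simp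
      finally show ?thesis using a1 by linarith
    qed
    have B: "\<exists>s\<in>{0..\<sigma>}. h s < 2*d*r \<and> h (s - t) < 2*d*r" if t: "t \<in> {0..\<sigma>}" for t
    proof (rule ccontr)
      assume neg: "\<not> ?thesis"
      have H: "2*d*r \<le> h s + h (s - t)" if s: "s \<in> {0..\<sigma>}" for s
      proof -
        have "\<not> (h s < 2*d*r \<and> h (s - t) < 2*d*r)" using neg s by blast
        then show ?thesis using h_nn[of s] h_nn[of "s - t"] by linarith
      qed
      have hsh: "(\<lambda>s. h (s - t)) = h \<circ> (+) (-t)" by (auto simp: fun_eq_iff)
      have hsh_cont: "continuous_on UNIV (\<lambda>s. h (s - t))"
        by (rule continuous_on_compose2[OF h_cont]) (auto intro!: continuous_intros)
      have i1: "integral {0..\<sigma>} (\<lambda>s. 2*d*r) \<le> integral {0..\<sigma>} (\<lambda>s. h s + h (s - t))"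
        by (rule integral_le) (auto intro!: icont continuous_intros h_cont hsh_cont H)
      have i2: "integral {0..\<sigma>} (\<lambda>s. h s + h (s - t)) = integral {0..\<sigma>} h + integral {0..\<sigma>} (\<lambda>s. h (s - t))"
        by (intro integral_add icont h_cont hsh_cont)
      have i3: "integral {0..\<sigma>} (\<lambda>s. h (s - t)) = integral {-t..\<sigma>-t} h"
        unfolding hsh using integral_shift_Icc_real[of 0 \<sigma> h "-t"] by simp
      have i4: "integral {0..\<sigma>} h \<le> integral {-\<sigma>..\<sigma>} h"
        using \<sigma> by (intro integral_subset_le icont h_cont) (auto simp: h_nn)
      have i5: "integral {-t..\<sigma>-t} h \<le> integral {-\<sigma>..\<sigma>} h"
        using t by (intro integral_subset_le icont h_cont) (auto simp: h_nn)
      have "integral {0..\<sigma>} (\<lambda>s. 2*d*r) \<le> 2 * integral {-\<sigma>..\<sigma>} h"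
        using i1 i2 i3 i4 i5 by linarith
      moreover have "integral {0..\<sigma>} (\<lambda>s. 2*d*r) = 2 * (d * (\<sigma> * r))" using \<sigma> by simp
      moreover have "12 * \<delta> * \<sigma> * r = 12 * (\<delta> * (\<sigma> * r))" by simp
      moreover have "(\<delta> * 48) * (\<sigma> * r) \<le> d * (\<sigma> * r)"
        using \<delta> \<sigma> r by (intro mult_right_mono) auto
      moreover have "(\<delta> * 48) * (\<sigma> * r) = 48 * (\<delta> * (\<sigma> * r))" by simp
      moreover have "d * (\<sigma> * r) > 0" using d \<sigma> r by simp
      ultimately show False using A by linarith
    qed
    have close: "norm (\<rho> s \<xi> - \<eta>) < \<epsilon> * r" if "h s < 2*d*r" for s
    proof (rule ccontr)
      assume "\<not> ?thesis"
      then have xy: "norm (\<rho> s \<xi> - \<eta>) \<ge> \<epsilon> * r" by simp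
      have x: "norm (\<rho> s \<xi>) \<le> r" using iso[of s \<xi>] \<xi>r by simp
      have y: "norm \<eta> \<le> r" using \<eta>\<xi> \<xi>r by linarith
      have "G s \<le> 2 * (1 - d) * r" unfolding G_def by (rule ucs[OF UC r x y xy])
      then show False using that by (simp add: h_def algebra_simps)
    qed
    have C: "norm (\<rho> t \<xi> - \<xi>) < 2*\<epsilon>*r" if t: "t \<in> {0..\<sigma>}" for t
    proof -
      obtain s where s: "s \<in> {0..\<sigma>}" "h s < 2*d*r" "h (s - t) < 2*d*r" using B[OF t] by blast
      have "\<rho> s \<xi> = \<rho> (s - t) (\<rho> t \<xi>)" using comp[of "s - t" t \<xi>] by simp
      then have "\<rho> s \<xi> - \<rho> (s - t) \<xi> = \<rho> (s - t) (\<rho> t \<xi> - \<xi>)"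
        using linear_diff[OF lin[of "s - t"]] by simp
      then have "norm (\<rho> t \<xi> - \<xi>) = norm ((\<rho> s \<xi> - \<eta>) - (\<rho> (s - t) \<xi> - \<eta>))" by (simp add: iso)
      also have "\<dots> \<le> norm (\<rho> s \<xi> - \<eta>) + norm (\<rho> (s - t) \<xi> - \<eta>)" by (rule norm_triangle_ineq4)
      also have "\<dots> < 2*\<epsilon>*r" using close[OF s(2)] close[OF s(3)] by simp
      finally show ?thesis .
    qed
    show "(\<forall>t. \<bar>t\<bar> \<le> exp a \<longrightarrow> norm (\<rho> t \<xi> - \<xi>) \<le> 2 * \<epsilon> * r) \<and> norm (\<xi> - gauss_op \<rho> a \<xi>) \<le> 3 * \<epsilon> * r"
    proof (intro conjI allI impI)
      fix t assume t: "\<bar>t\<bar> \<le> exp a"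
      show "norm (\<rho> t \<xi> - \<xi>) \<le> 2 * \<epsilon> * r"
      proof (cases "t \<ge> 0")
        case True then show ?thesis using C[of t] t by (simp add: \<sigma>_def)
      next
        case False
        have "\<rho> (-t) (\<rho> t \<xi>) = \<xi>" using comp[of "-t" t \<xi>] \<rho>0 by simp
        then have "\<rho> (-t) (\<rho> t \<xi> - \<xi>) = \<xi> - \<rho> (-t) \<xi>"
          using linear_diff[OF lin[of "-t"]] by simp
        then have "norm (\<rho> t \<xi> - \<xi>) = norm (\<xi> - \<rho> (-t) \<xi>)"
          using iso[of "-t" "\<rho> t \<xi> - \<xi>"] by simp
        also have "\<dots> = norm (\<rho> (-t) \<xi> - \<xi>)" by (rule norm_minus_commute)
        also have "\<dots> < 2 * \<epsilon> * r" using C[of "-t"] t False by (simp add: \<sigma>_def)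
        finally show ?thesis by simp
      qed
    next
      obtain s where s: "s \<in> {0..\<sigma>}" "h s < 2*d*r" using B[of 0] \<sigma> by auto
      have "norm (\<xi> - \<eta>) = norm ((\<rho> s \<xi> - \<eta>) - (\<rho> s \<xi> - \<xi>))" by (simp add: algebra_simps)
      also have "\<dots> \<le> norm (\<rho> s \<xi> - \<eta>) + norm (\<rho> s \<xi> - \<xi>)" by (rule norm_triangle_ineq4)
      also have "\<dots> < 3*\<epsilon>*r" using close[OF s(2)] C[OF s(1)] by simp
      finally show "norm (\<xi> - gauss_op \<rho> a \<xi>) \<le> 3 * \<epsilon> * r" by (simp add: \<eta>_def)
    qed
  qed
qed

lemma contraction:
  assumes rep: "isometric_rep \<rho>"
  shows "norm (gauss_op \<rho> a x) \<le> norm (x::'a::banach)"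
proof (cases "(\<lambda>s. normal_density 0 (exp a) s *\<^sub>R \<rho> s x) integrable_on UNIV")
  case False
  then show ?thesis by (simp add: gauss_op_def not_integrable_integral)
next
  case True
  have iso: "\<And>t x. norm (\<rho> t x) = norm x" using rep unfolding isometric_rep_def by auto
  have p_int: "(normal_density 0 (exp a) has_integral 1) UNIV" using dens_int[of "exp a"] by simp
  have "norm (gauss_op \<rho> a x) \<le> integral UNIV (\<lambda>s. normal_density 0 (exp a) s * norm x)"
    unfolding gauss_op_def
    by (rule integral_norm_bound_integral[OF True])
       (auto simp: iso intro!: integrable_on_mult_left[OF has_integral_integrable[OF p_int]])
  also have "\<dots> = norm x" using integral_unique[OF has_integral_mult_left[OF p_int, of "norm x"]] by simp
  finally show ?thesis .
qed

theorem proposition3p4: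
  fixes n :: nat
  assumes "uniformly_convex TYPE('a::banach)"
    and "n > 0"
  shows "\<forall>\<epsilon>>0. \<exists>\<delta>>0. \<forall>(\<rho>::nat \<Rightarrow> real \<Rightarrow> 'a \<Rightarrow> 'a) (a::nat \<Rightarrow> real) (\<xi>::'a).
           (\<forall>i<n. isometric_rep (\<rho> i)) \<longrightarrow>
           norm (gauss_prod n \<rho> a \<xi>) \<ge> (1 - \<delta>) * norm \<xi> \<longrightarrow>
           (\<forall>i<n. \<forall>t. \<bar>t\<bar> \<le> exp (a i) \<longrightarrow> norm (\<rho> i t \<xi> - \<xi>) \<le> \<epsilon> * norm \<xi>)"
proof (intro allI impI)
  fix \<epsilon> :: real assume e: "\<epsilon> > 0"
  define e' where "e' = \<epsilon> / (6 * real n + 2)"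
  have e': "e' > 0" using e by (simp add: e'_def)
  have e'eq: "(6 * real n + 2) * e' = \<epsilon>" by (simp add: e'_def)
  obtain \<delta> where \<delta>: "\<delta> > 0" "\<delta> < 1" and S: "\<forall>(\<rho>::real \<Rightarrow> 'a \<Rightarrow> 'a) a \<xi> r. isometric_rep \<rho> \<longrightarrow> r > 0 \<longrightarrow> norm \<xi> \<le> r \<longrightarrow>
      norm (gauss_op \<rho> a \<xi>) \<ge> (1 - \<delta>) * r \<longrightarrow>
      (\<forall>t. \<bar>t\<bar> \<le> exp a \<longrightarrow> norm (\<rho> t \<xi> - \<xi>) \<le> 2 * e' * r) \<and> norm (\<xi> - gauss_op \<rho> a \<xi>) \<le> 3 * e' * r"
    using single[OF assms(1) e'] by blast
  show "\<exists>\<delta>>0. \<forall>(\<rho>::nat \<Rightarrow> real \<Rightarrow> 'a \<Rightarrow> 'a) (a::nat \<Rightarrow> real) (\<xi>::'a).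
           (\<forall>i<n. isometric_rep (\<rho> i)) \<longrightarrow>
           norm (gauss_prod n \<rho> a \<xi>) \<ge> (1 - \<delta>) * norm \<xi> \<longrightarrow>
           (\<forall>i<n. \<forall>t. \<bar>t\<bar> \<le> exp (a i) \<longrightarrow> norm (\<rho> i t \<xi> - \<xi>) \<le> \<epsilon> * norm \<xi>)"
  proof (rule exI[of _ \<delta>], rule conjI[OF \<delta>(1)], intro allI impI)
    fix \<rho> :: "nat \<Rightarrow> real \<Rightarrow> 'a \<Rightarrow> 'a" and a :: "nat \<Rightarrow> real" and \<xi> :: 'a and i t
    assume reps: "\<forall>i<n. isometric_rep (\<rho> i)"
      and big: "norm (gauss_prod n \<rho> a \<xi>) \<ge> (1 - \<delta>) * norm \<xi>"
      and i: "i < n" and t: "\<bar>t\<bar> \<le> exp (a i)"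
    have lin: "linear (\<rho> i t)" using reps i unfolding isometric_rep_def by auto
    have isoi: "\<And>x. norm (\<rho> i t x) = norm x" using reps i unfolding isometric_rep_def by auto
    show "norm (\<rho> i t \<xi> - \<xi>) \<le> \<epsilon> * norm \<xi>"
    proof (cases "\<xi> = 0")
      case True then show ?thesis using linear_0[OF lin] by simp
    next
      case False
      define r where "r = norm \<xi>"
      have r: "r > 0" using False by (simp add: r_def)
      define P where "P j = foldr (\<lambda>i f. gauss_op (\<rho> i) (a i) \<circ> f) [j..<n] id" for j
      have Pn: "P n = id" by (simp add: P_def)
      have Pstep: "P j x = gauss_op (\<rho> j) (a j) (P (Suc j) x)" if "j < n" for j x
        using that by (simp add: P_def upt_conv_Cons)
      have P0: "gauss_prod n \<rho> a = P 0" by (simp add: P_def gauss_prod_def)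
      have normP: "norm (P j \<xi>) \<le> r" if "j \<le> n" for j
        using that
      proof (induction j rule: inc_induct)
        case base then show ?case by (simp add: Pn r_def)
      next
        case (step m)
        then show ?case using Pstep[of m \<xi>] contraction[of "\<rho> m" "a m" "P (Suc m) \<xi>"] reps by auto
      qed
      have mono: "norm (P 0 \<xi>) \<le> norm (P j \<xi>)" if "j \<le> n" for j
        using that
      proof (induction j)
        case 0 then show ?case by simp
      next
        case (Suc j)
        then show ?case using Pstep[of j \<xi>] contraction[of "\<rho> j" "a j" "P (Suc j) \<xi>"] reps by auto
      qed
      have bigP: "norm (gauss_op (\<rho> j) (a j) (P (Suc j) \<xi>)) \<ge> (1 - \<delta>) * r" if "j < n" for j
        using mono[of j] big that Pstep[of j \<xi>] by (simp add: P0 r_def)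
      have dist: "norm (P j \<xi> - \<xi>) \<le> 3 * e' * real (n - j) * r" if "j \<le> n" for j
        using that
      proof (induction j rule: inc_induct)
        case base then show ?case by (simp add: Pn)
      next
        case (step m)
        let ?x = "P (Suc m) \<xi>"
        have "norm (?x - gauss_op (\<rho> m) (a m) ?x) \<le> 3 * e' * r"
          using S[rule_format, OF reps[rule_format, OF step(2)] r normP[of "Suc m"] bigP[of m]] step(2) by simp
        then have "norm (P m \<xi> - ?x) \<le> 3 * e' * r" using Pstep[of m \<xi>] step(2)
          by (simp add: norm_minus_commute)
        moreover have "norm (P m \<xi> - \<xi>) \<le> norm (P m \<xi> - ?x) + norm (?x - \<xi>)"
          using norm_triangle_ineq[of "P m \<xi> - ?x" "?x - \<xi>"] by simp
        moreover have "real (n - m) = real (n - Suc m) + 1" using step(2) by simp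
        ultimately show ?case using step(3) by (simp add: algebra_simps)
      qed
      let ?x = "P (Suc i) \<xi>"
      have A1: "norm (\<rho> i t ?x - ?x) \<le> 2 * e' * r"
        using S[rule_format, OF reps[rule_format, OF i] r normP[of "Suc i"] bigP[of i]] i t by simp
      have A2: "norm (?x - \<xi>) \<le> 3 * e' * real n * r"
      proof -
        have "norm (?x - \<xi>) \<le> 3 * e' * real (n - Suc i) * r" using dist[of "Suc i"] i by simp
        also have "\<dots> \<le> 3 * e' * real n * r" using e' r
          by (intro mult_right_mono mult_left_mono) auto
        finally show ?thesis .
      qed
      have eq: "\<rho> i t \<xi> - \<xi> = (\<rho> i t (\<xi> - ?x) + (\<rho> i t ?x - ?x)) + (?x - \<xi>)"
        using linear_diff[OF lin, of \<xi> ?x] by simp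
      have n1: "norm (\<rho> i t \<xi> - \<xi>) \<le> norm (\<rho> i t (\<xi> - ?x) + (\<rho> i t ?x - ?x)) + norm (?x - \<xi>)"
        unfolding eq by (rule norm_triangle_ineq)
      have n2: "norm (\<rho> i t (\<xi> - ?x) + (\<rho> i t ?x - ?x)) \<le> norm (\<rho> i t (\<xi> - ?x)) + norm (\<rho> i t ?x - ?x)"
        by (rule norm_triangle_ineq)
      have n3: "norm (\<rho> i t (\<xi> - ?x)) = norm (?x - \<xi>)" by (simp add: isoi norm_minus_commute)
      have "norm (\<rho> i t \<xi> - \<xi>) \<le> 2 * (3 * e' * real n * r) + 2 * e' * r"
        using n1 n2 n3 A1 A2 by linarith
      also have "\<dots> = ((6 * real n + 2) * e') * r" by (simp add: algebra_simps)
      finally show ?thesis by (simp add: e'eq r_def)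
    qed
  qed
qed

end
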